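(* Assume the setting below, with $f$ twice continuously differentiable and $\mathbf{H}(\mathbf{x})=d^2f(\mathbf{x})$ positive definite for every $\mathbf{x}$. Let $I\subset(0,\infty)$ be an open interval such that for every $\rho\in I$ the function $\mathcal{E}_\rho$ has a (necessarily unique) minimizer $\mathbf{x}(\rho)$, the map $\rho\mapsto\mathbf{x}(\rho)$ is continuous on $I$, the index sets $\mathcal{N}_E,\mathcal{Z}_E,\mathcal{P}_E,\mathcal{N}_I,\mathcal{Z}_I,\mathcal{P}_I$ computed at $\mathbf{x}(\rho)$ do not depend on $\rho\in I$, and the rows of $\mathbf{U}_{\mathcal{Z}}$ are linearly independent. Then $\rho\mapsto\mathbf{x}(\rho)$ is differentiable on $I$ and satisfies the ordinary differential equation $$\frac{d\mathbf{x}(\rho)}{d\rho}=-\mathbf{P}(\mathbf{x}(\rho))\,\mathbf{u}_{\bar{\mathcal{Z}}}.$$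
   Context: Setting: $f:\mathbb{R}^p\to\mathbb{R}$ convex and twice continuously differentiable; vectors $\mathbf{v}_1,\dots,\mathbf{v}_r,\mathbf{w}_1,\dots,\mathbf{w}_s\in\mathbb{R}^p$ and scalars $d_1,\dots,d_r,e_1,\dots,e_s$; $g_i(\mathbf{x})=\mathbf{v}_i^t\mathbf{x}-d_i$, $h_j(\mathbf{x})=\mathbf{w}_j^t\mathbf{x}-e_j$; $\mathcal{E}_\rho(\mathbf{x})=f(\mathbf{x})+\rho\sum_i|g_i(\mathbf{x})|+\rho\sum_j\max\{0,h_j(\mathbf{x})\}$ (equivalently $f(\mathbf{x})+\rho\|\mathbf{V}\mathbf{x}-\mathbf{d}\|_1+\rho\|\mathbf{W}\mathbf{x}-\mathbf{e}\|_+$, where $\|\mathbf{v}\|_+=\sum_i\max\{v_i,0\}$). Index sets at $\mathbf{x}$: $\mathcal{N}_E=\{i:g_i(\mathbf{x})<0\}$, $\mathcal{Z}_E=\{i:g_i(\mathbf{x})=0\}$, $\mathcal{P}_E=\{i:g_i(\mathbf{x})>0\}$, $\mathcal{N}_I=\{j:h_j(\mathbf{x})<0\}$, $\mathcal{Z}_I=\{j:h_j(\mathbf{x})=0\}$, $\mathcal{P}_I=\{j:h_j(\mathbf{x})>0\}$. $\mathbf{U}_{\mathcal{Z}}$ is the matrix whose rows are $\mathbf{v}_i^t$, $i\in\mathcal{Z}_E$, and $\mathbf{w}_j^t$, $j\in\mathcal{Z}_I$. $\mathbf{u}_{\bar{\mathcal{Z}}}=-\sum_{i\in\mathcal{N}_E}\mathbf{v}_i+\sum_{i\in\mathcal{P}_E}\mathbf{v}_i+\sum_{j\in\mathcal{P}_I}\mathbf{w}_j$.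 With $\mathbf{H}=\mathbf{H}(\mathbf{x})=d^2f(\mathbf{x})$ invertible and $\mathbf{U}_{\mathcal{Z}}$ of full row rank: $\mathbf{P}(\mathbf{x})=\mathbf{H}^{-1}-\mathbf{H}^{-1}\mathbf{U}_{\mathcal{Z}}^t[\mathbf{U}_{\mathcal{Z}}\mathbf{H}^{-1}\mathbf{U}_{\mathcal{Z}}^t]^{-1}\mathbf{U}_{\mathcal{Z}}\mathbf{H}^{-1}$, $\mathbf{Q}(\mathbf{x})=\mathbf{H}^{-1}\mathbf{U}_{\mathcal{Z}}^t[\mathbf{U}_{\mathcal{Z}}\mathbf{H}^{-1}\mathbf{U}_{\mathcal{Z}}^t]^{-1}$, $\mathbf{R}(\mathbf{x})=-[\mathbf{U}_{\mathcal{Z}}\mathbf{H}^{-1}\mathbf{U}_{\mathcal{Z}}^t]^{-1}$ (these are the blocks of the inverse of $\begin{pmatrix}\mathbf{H}&\mathbf{U}_{\mathcal{Z}}^t\\\mathbf{U}_{\mathcal{Z}}&\mathbf{0}\end{pmatrix}$). *)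

theory Defs
  imports "HOL-Analysis.Analysis"
begin

text \<open>Constraint data: equality constraints g_i(x) = v_i . x - d_i for i < r,
  inequality constraints h_j(x) = w_j . x - e_j for j < s.\<close>

definition penE :: "('a::real_inner \<Rightarrow> real) \<Rightarrow> (nat \<Rightarrow> 'a) \<Rightarrow> (nat \<Rightarrow> real) \<Rightarrow> nat
    \<Rightarrow> (nat \<Rightarrow> 'a) \<Rightarrow> (nat \<Rightarrow> real) \<Rightarrow> nat \<Rightarrow> real \<Rightarrow> 'a \<Rightarrow> real" where
  "penE f v d r w e s \<rho> x =
     f x + \<rho> * (\<Sum>i<r. \<bar>v i \<bullet> x - d i\<bar>) + \<rho> * (\<Sum>j<s. max 0 (w j \<bullet> x - e j))"

definition NE :: "(nat \<Rightarrow> 'a::real_inner) \<Rightarrow> (nat \<Rightarrow> real) \<Rightarrow> nat \<Rightarrow> 'a \<Rightarrow> nat set" where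
  "NE v d r x = {i. i < r \<and> v i \<bullet> x - d i < 0}"
definition ZE :: "(nat \<Rightarrow> 'a::real_inner) \<Rightarrow> (nat \<Rightarrow> real) \<Rightarrow> nat \<Rightarrow> 'a \<Rightarrow> nat set" where
  "ZE v d r x = {i. i < r \<and> v i \<bullet> x - d i = 0}"
definition PE :: "(nat \<Rightarrow> 'a::real_inner) \<Rightarrow> (nat \<Rightarrow> real) \<Rightarrow> nat \<Rightarrow> 'a \<Rightarrow> nat set" where
  "PE v d r x = {i. i < r \<and> v i \<bullet> x - d i > 0}"
definition NI :: "(nat \<Rightarrow> 'a::real_inner) \<Rightarrow> (nat \<Rightarrow> real) \<Rightarrow> nat \<Rightarrow> 'a \<Rightarrow> nat set" where
  "NI w e s x = {j. j < s \<and> w j \<bullet> x - e j < 0}"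
definition ZI :: "(nat \<Rightarrow> 'a::real_inner) \<Rightarrow> (nat \<Rightarrow> real) \<Rightarrow> nat \<Rightarrow> 'a \<Rightarrow> nat set" where
  "ZI w e s x = {j. j < s \<and> w j \<bullet> x - e j = 0}"
definition PI :: "(nat \<Rightarrow> 'a::real_inner) \<Rightarrow> (nat \<Rightarrow> real) \<Rightarrow> nat \<Rightarrow> 'a \<Rightarrow> nat set" where
  "PI w e s x = {j. j < s \<and> w j \<bullet> x - e j > 0}"

text \<open>Rows of U_Z are indexed by the set Z = Inl ` Z_E \<union> Inr ` Z_I; row (Inl i) = v_i, row (Inr j) = w_j.\<close>

definition Zrow :: "(nat \<Rightarrow> 'a) \<Rightarrow> (nat \<Rightarrow> 'a) \<Rightarrow> nat + nat \<Rightarrow> 'a" where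
  "Zrow v w = case_sum v w"

definition Zset :: "(nat \<Rightarrow> 'a::real_inner) \<Rightarrow> (nat \<Rightarrow> real) \<Rightarrow> nat
    \<Rightarrow> (nat \<Rightarrow> 'a) \<Rightarrow> (nat \<Rightarrow> real) \<Rightarrow> nat \<Rightarrow> 'a \<Rightarrow> (nat + nat) set" where
  "Zset v d r w e s x = Inl ` ZE v d r x \<union> Inr ` ZI w e s x"

definition ubar :: "(nat \<Rightarrow> 'a::real_inner) \<Rightarrow> (nat \<Rightarrow> real) \<Rightarrow> nat
    \<Rightarrow> (nat \<Rightarrow> 'a) \<Rightarrow> (nat \<Rightarrow> real) \<Rightarrow> nat \<Rightarrow> 'a \<Rightarrow> 'a" where
  "ubar v d r w e s x = - (\<Sum>i\<in>NE v d r x. v i) + (\<Sum>i\<in>PE v d r x. v i) + (\<Sum>j\<in>PI w e s x. w j)"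

definition rows_indep :: "(nat + nat \<Rightarrow> 'a::real_vector) \<Rightarrow> (nat + nat) set \<Rightarrow> bool" where
  "rows_indep rw Z \<longleftrightarrow> (\<forall>c. (\<Sum>a\<in>Z. c a *\<^sub>R rw a) = 0 \<longrightarrow> (\<forall>a\<in>Z. c a = 0))"

definition set_mat_inv :: "'k set \<Rightarrow> ('k \<Rightarrow> 'k \<Rightarrow> real) \<Rightarrow> ('k \<Rightarrow> 'k \<Rightarrow> real)" where
  "set_mat_inv S M = (THE M'. (\<forall>a\<in>S. \<forall>b\<in>S. (\<Sum>c\<in>S. M a c * M' c b) = (if a = b then 1 else 0))
                           \<and> (\<forall>a b. a \<notin> S \<or> b \<notin> S \<longrightarrow> M' a b = 0))"

text \<open>P = H^-1 - H^-1 U_Z^t [U_Z H^-1 U_Z^t]^-1 U_Z H^-1, written out entrywise.\<close>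
definition Pmat :: "real^'n^'n \<Rightarrow> (nat + nat \<Rightarrow> real^'n) \<Rightarrow> (nat + nat) set \<Rightarrow> real^'n^'n" where
  "Pmat H rw Z =
    (let Hi = matrix_inv H;
         K = (\<lambda>a b. rw a \<bullet> (Hi *v rw b));
         Ki = set_mat_inv Z K
     in Hi - (\<chi> i j. \<Sum>a\<in>Z. \<Sum>b\<in>Z. (Hi *v rw a) $ i * Ki a b * (rw b v* Hi) $ j))"

end

theory Submission
  imports Defs
begin


lemma ev_pos_lin:
  fixes a b :: real assumes "a > 0"
  shows "eventually (\<lambda>t. a + t*b > 0) (nhds 0)"
proof -
  have "open {t::real. 0 < a + t*b}"
    by (intro open_Collect_less continuous_intros)
  then show ?thesis using assms unfolding eventually_nhds by (intro exI[of _ "{t. 0 < a + t*b}"]) auto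
qed

lemma deriv_abs_lin:
  fixes a b :: real assumes "a = 0 \<Longrightarrow> b = 0"
  shows "((\<lambda>t. \<bar>a + t*b\<bar>) has_real_derivative (sgn a * b)) (at 0)"
proof -
  have lin: "((\<lambda>t. a + t*b) has_real_derivative b) (at 0)"
    by (auto intro!: derivative_eq_intros)
  consider "a > 0" | "a < 0" | "a = 0" by linarith
  then show ?thesis
  proof cases
    case 1
    have "eventually (\<lambda>t. \<bar>a + t*b\<bar> = a + t*b) (nhds 0)"
      using ev_pos_lin[OF 1, of b] by (auto elim: eventually_mono)
    then show ?thesis using lin 1 by (subst DERIV_cong_ev[OF refl _ refl]) auto
  next
    case 2
    have "eventually (\<lambda>t. \<bar>a + t*b\<bar> = -(a + t*b)) (nhds 0)"
      using ev_pos_lin[of "-a" "-b"] 2 by (auto elim: eventually_mono)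
    moreover have "((\<lambda>t. -(a + t*b)) has_real_derivative (-b)) (at 0)"
      using lin by (rule DERIV_minus)
    ultimately show ?thesis using 2 by (subst DERIV_cong_ev[OF refl _ refl]) auto
  next
    case 3
    then show ?thesis using assms by simp
  qed
qed

lemma deriv_max_lin:
  fixes a b :: real assumes "a = 0 \<Longrightarrow> b = 0"
  shows "((\<lambda>t. max 0 (a + t*b)) has_real_derivative (if a > 0 then b else 0)) (at 0)"
proof -
  have lin: "((\<lambda>t. a + t*b) has_real_derivative b) (at 0)"
    by (auto intro!: derivative_eq_intros)
  consider "a > 0" | "a < 0" | "a = 0" by linarith
  then show ?thesis
  proof cases
    case 1
    have "eventually (\<lambda>t. max 0 (a + t*b) = a + t*b) (nhds 0)"
      using ev_pos_lin[OF 1, of b] by (auto elim: eventually_mono)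
    then show ?thesis using lin 1 by (subst DERIV_cong_ev[OF refl _ refl]) auto
  next
    case 2
    have "eventually (\<lambda>t. max 0 (a + t*b) = 0) (nhds 0)"
      using ev_pos_lin[of "-a" "-b"] 2 by (auto elim: eventually_mono)
    then show ?thesis using 2 by (subst DERIV_cong_ev[OF refl _ refl]) auto
  next
    case 3
    then show ?thesis using assms by simp
  qed
qed



lemma sum_sgn_split:
  fixes a b :: "nat \<Rightarrow> real"
  shows "(\<Sum>i<r. sgn (a i) * b i) = (\<Sum>i\<in>{i. i < r \<and> a i > 0}. b i) - (\<Sum>i\<in>{i. i < r \<and> a i < 0}. b i)"
proof -
  have e1: "{i. i < r \<and> a i > 0} = {i\<in>{..<r}. a i > 0}" by auto
  have e2: "{i. i < r \<and> a i < 0} = {i\<in>{..<r}. a i < 0}" by auto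
  show ?thesis unfolding e1 e2 sum.inter_filter[OF finite_lessThan] sum_subtractf[symmetric]
    by (rule sum.cong) (auto simp: sgn_if)
qed

lemma sum_pos_part:
  fixes a b :: "nat \<Rightarrow> real"
  shows "(\<Sum>i<r. if a i > 0 then b i else 0) = (\<Sum>i\<in>{i. i < r \<and> a i > 0}. b i)"
proof -
  have e1: "{i. i < r \<and> a i > 0} = {i\<in>{..<r}. a i > 0}" by auto
  show ?thesis unfolding e1 sum.inter_filter[OF finite_lessThan] ..
qed

lemma optimality:
  fixes f :: "'a::real_inner \<Rightarrow> real"
  assumes grad: "(f has_derivative (\<lambda>h. g \<bullet> h)) (at x)"
    and min: "\<forall>y. penE f v d r w e s \<rho> x \<le> penE f v d r w e s \<rho> y"
    and zE: "\<forall>i<r. v i \<bullet> x - d i = 0 \<longrightarrow> v i \<bullet> z = 0"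
    and zI: "\<forall>j<s. w j \<bullet> x - e j = 0 \<longrightarrow> w j \<bullet> z = 0"
  shows "(g + \<rho> *\<^sub>R ubar v d r w e s x) \<bullet> z = 0"
proof -
  have "((\<lambda>t. x + t *\<^sub>R z) has_derivative (\<lambda>t. t *\<^sub>R z)) (at 0)"
    by (auto intro!: derivative_eq_intros)
  from has_derivative_compose[OF this, of f "\<lambda>h. g \<bullet> h"] grad
  have 1: "((\<lambda>t. f (x + t *\<^sub>R z)) has_derivative (\<lambda>t. g \<bullet> (t *\<^sub>R z))) (at 0)" by simp
  have 2: "(\<lambda>t. g \<bullet> (t *\<^sub>R z)) = (*) (g \<bullet> z)" by (simp add: fun_eq_iff)
  have df: "((\<lambda>t. f (x + t *\<^sub>R z)) has_real_derivative (g \<bullet> z)) (at 0)"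
    unfolding has_field_derivative_def using 1 unfolding 2 .
  have dE: "((\<lambda>t. \<bar>v i \<bullet> (x + t *\<^sub>R z) - d i\<bar>) has_real_derivative sgn (v i \<bullet> x - d i) * (v i \<bullet> z)) (at 0)"
    if "i \<in> {..<r}" for i
  proof -
    have "(\<lambda>t. \<bar>v i \<bullet> (x + t *\<^sub>R z) - d i\<bar>) = (\<lambda>t. \<bar>(v i \<bullet> x - d i) + t * (v i \<bullet> z)\<bar>)"
      by (simp add: inner_add_right algebra_simps)
    then show ?thesis using deriv_abs_lin[of "v i \<bullet> x - d i" "v i \<bullet> z"] zE that by auto
  qed
  have dI: "((\<lambda>t. max 0 (w j \<bullet> (x + t *\<^sub>R z) - e j)) has_real_derivative
       (if w j \<bullet> x - e j > 0 then w j \<bullet> z else 0)) (at 0)"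
    if "j \<in> {..<s}" for j
  proof -
    have "(\<lambda>t. max 0 (w j \<bullet> (x + t *\<^sub>R z) - e j)) = (\<lambda>t. max 0 ((w j \<bullet> x - e j) + t * (w j \<bullet> z)))"
      by (simp add: inner_add_right algebra_simps)
    then show ?thesis using deriv_max_lin[of "w j \<bullet> x - e j" "w j \<bullet> z"] zI that by auto
  qed
  let ?D = "g \<bullet> z + \<rho> * (\<Sum>i<r. sgn (v i \<bullet> x - d i) * (v i \<bullet> z))
     + \<rho> * (\<Sum>j<s. if w j \<bullet> x - e j > 0 then w j \<bullet> z else 0)"
  have dphi: "((\<lambda>t. penE f v d r w e s \<rho> (x + t *\<^sub>R z)) has_real_derivative ?D) (at 0)"
    unfolding penE_def
    by (intro DERIV_add DERIV_cmult DERIV_sum df dE dI)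
  have D0: "?D = 0" by (rule DERIV_local_min[OF dphi zero_less_one]) (use min in simp)
  have "ubar v d r w e s x \<bullet> z = (\<Sum>i<r. sgn (v i \<bullet> x - d i) * (v i \<bullet> z))
     + (\<Sum>j<s. if w j \<bullet> x - e j > 0 then w j \<bullet> z else 0)"
    unfolding ubar_def NE_def PE_def PI_def sum_sgn_split[of "\<lambda>i. v i \<bullet> x - d i"]
      sum_pos_part[of "\<lambda>j. w j \<bullet> x - e j"]
    by (simp add: inner_add_left inner_diff_left inner_sum_left)
  then show ?thesis using D0 by (simp add: inner_add_left algebra_simps)
qed



lemma rows_indepD: "rows_indep rw Z \<Longrightarrow> (\<Sum>a\<in>Z. c a *\<^sub>R rw a) = 0 \<Longrightarrow> a \<in> Z \<Longrightarrow> c a = 0"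
  by (simp add: rows_indep_def)

lemma rows_indep_inj:
  assumes ind: "rows_indep rw Z" and fin: "finite Z"
  shows "inj_on rw Z"
proof (rule inj_onI, rule ccontr)
  fix a b assume ab: "a \<in> Z" "b \<in> Z" "rw a = rw b" "a \<noteq> b"
  let ?c = "\<lambda>x. (if x = a then 1 else 0) + (if x = b then -1 else (0::real))"
  have "(\<Sum>x\<in>Z. ?c x *\<^sub>R rw x) = (\<Sum>x\<in>Z. (if x = a then rw a else 0)) + (\<Sum>x\<in>Z. (if x = b then - rw b else 0))"
    unfolding sum.distrib[symmetric] by (rule sum.cong) (auto simp: scaleR_add_left)
  also have "\<dots> = 0" using ab fin by (simp add: sum.delta)
  finally have "(\<Sum>x\<in>Z. ?c x *\<^sub>R rw x) = 0" .
  hence "?c a = 0" using rows_indepD[OF ind _ ab(1), of ?c] by blast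
  thus False using ab by simp
qed

lemma rows_indep_independent:
  fixes rw :: "nat + nat \<Rightarrow> 'a::euclidean_space"
  assumes ind: "rows_indep rw Z" and fin: "finite Z"
  shows "independent (rw ` Z)"
  unfolding eucl.independent_explicit
proof (intro conjI allI impI ballI)
  show "finite (rw ` Z)" using fin by simp
  fix c v assume s: "(\<Sum>v\<in>rw ` Z. c v *\<^sub>R v) = 0" and v: "v \<in> rw ` Z"
  have "(\<Sum>a\<in>Z. c (rw a) *\<^sub>R rw a) = 0"
    using s sum.reindex[OF rows_indep_inj[OF ind fin], of "\<lambda>v. c v *\<^sub>R v"] by simp
  then have "\<forall>a\<in>Z. c (rw a) = 0" using rows_indepD[OF ind, of "\<lambda>a. c (rw a)"] by blast
  then show "c v = 0" using v by auto
qed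

lemma span_rows:
  assumes ind: "rows_indep rw Z" and fin: "finite Z" and y: "y \<in> span (rw ` Z)"
  shows "\<exists>c. y = (\<Sum>a\<in>Z. c a *\<^sub>R rw a)"
proof -
  from y obtain u where "y = (\<Sum>v\<in>rw ` Z. u v *\<^sub>R v)"
    using span_finite[of "rw ` Z"] fin by auto
  then have "y = (\<Sum>a\<in>Z. u (rw a) *\<^sub>R rw a)"
    using sum.reindex[OF rows_indep_inj[OF ind fin], of "\<lambda>v. u v *\<^sub>R v"] by simp
  then show ?thesis by (rule exI[of _ "\<lambda>a. u (rw a)"])
qed

lemma inner_G_comb:
  fixes G :: "real^'n^'n"
  shows "x \<bullet> (G *v (\<Sum>a\<in>Z. c a *\<^sub>R rw a)) = (\<Sum>a\<in>Z. (x \<bullet> (G *v rw a)) * c a)"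
  by (simp add: vec.sum matrix_vector_mult_scaleR inner_sum_right mult.commute)

lemma comb_quad:
  fixes G :: "real^'n^'n"
  shows "(\<Sum>a\<in>Z. c a *\<^sub>R rw a) \<bullet> (G *v (\<Sum>a\<in>Z. c a *\<^sub>R rw a))
     = (\<Sum>b\<in>Z. c b * (\<Sum>a\<in>Z. (rw b \<bullet> (G *v rw a)) * c a))"
proof -
  have "(\<Sum>a\<in>Z. c a *\<^sub>R rw a) \<bullet> (G *v (\<Sum>a\<in>Z. c a *\<^sub>R rw a))
     = (\<Sum>b\<in>Z. c b * (rw b \<bullet> (G *v (\<Sum>a\<in>Z. c a *\<^sub>R rw a))))"
    by (simp only: inner_sum_left inner_scaleR_left)
  also have "\<dots> = (\<Sum>b\<in>Z. c b * (\<Sum>a\<in>Z. (rw b \<bullet> (G *v rw a)) * c a))"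
    by (simp only: inner_G_comb)
  finally show ?thesis .
qed

lemma set_mat_inv_right:
  fixes G :: "real^'n^'n" and rw :: "nat + nat \<Rightarrow> real^'n"
  assumes ind: "rows_indep rw Z" and fin: "finite Z"
    and pd: "\<forall>y. y \<noteq> 0 \<longrightarrow> 0 < y \<bullet> (G *v y)"
  defines "K \<equiv> (\<lambda>a b. rw a \<bullet> (G *v rw b))"
  shows "\<forall>a\<in>Z. \<forall>b\<in>Z. (\<Sum>c\<in>Z. K a c * set_mat_inv Z K c b) = (if a = b then 1 else 0)"
proof -
  let ?P = "\<lambda>M'. (\<forall>a\<in>Z. \<forall>b\<in>Z. (\<Sum>c\<in>Z. K a c * M' c b) = (if a = b then 1 else 0))
                           \<and> (\<forall>a b. a \<notin> Z \<or> b \<notin> Z \<longrightarrow> M' a b = 0)"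
  have zero: "\<forall>a\<in>Z. c a = 0" if "\<forall>x\<in>Z. (\<Sum>a\<in>Z. K x a * c a) = 0" for c
  proof -
    let ?y = "\<Sum>a\<in>Z. c a *\<^sub>R rw a"
    have "?y \<bullet> (G *v ?y) = 0" unfolding comb_quad using that by (simp add: K_def)
    then have "?y = 0" using pd by force
    then show ?thesis using rows_indepD[OF ind, of c] by blast
  qed
  have uniq: "M1 = M2" if "?P M1" "?P M2" for M1 M2
  proof (intro ext)
    fix a b
    show "M1 a b = M2 a b"
    proof (cases "a \<in> Z \<and> b \<in> Z")
      case True
      have "\<forall>x\<in>Z. (\<Sum>c\<in>Z. K x c * (M1 c b - M2 c b)) = 0"
        using that True by (simp add: right_diff_distrib sum_subtractf)
      then show ?thesis using zero[of "\<lambda>c. M1 c b - M2 c b"] True by auto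
    next
      case False then show ?thesis using that by auto
    qed
  qed
  define T where "T = (\<lambda>y. \<Sum>a\<in>Z. (rw a \<bullet> (G *v y)) *\<^sub>R rw a)"
  have linT: "linear T"
    by (rule linearI) (simp_all add: T_def matrix_vector_right_distrib inner_add_right scaleR_add_left
       sum.distrib matrix_vector_mult_scaleR scaleR_sum_right)
  let ?W = "span (rw ` Z)"
  have TW: "T y \<in> ?W" for y unfolding T_def
    by (intro span_sum span_scale span_base) auto
  have T0: "y = 0" if yW: "y \<in> ?W" and Ty: "T y = 0" for y
  proof -
    obtain c where c: "y = (\<Sum>a\<in>Z. c a *\<^sub>R rw a)" using span_rows[OF ind fin yW] by blast
    have "\<forall>a\<in>Z. rw a \<bullet> (G *v y) = 0" using Ty rows_indepD[OF ind, of "\<lambda>a. rw a \<bullet> (G *v y)"] unfolding T_def by blast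
    then have "y \<bullet> (G *v y) = 0" unfolding c inner_sum_left by simp
    then show "y = 0" using pd by force
  qed
  have injT: "inj_on T ?W"
  proof (rule inj_onI)
    fix x y assume "x \<in> ?W" "y \<in> ?W" "T x = T y"
    then have "x - y \<in> ?W" "T (x - y) = 0" using linear_diff[OF linT] by (auto intro: span_diff)
    then have "x - y = 0" using T0 by blast
    then show "x = y" by simp
  qed
  have indB: "independent (rw ` Z)" using rows_indep_independent[OF ind fin] .
  have "?W \<subseteq> span (T ` (rw ` Z))"
  proof (rule card_ge_dim_independent)
    show "T ` rw ` Z \<subseteq> ?W" using TW by auto
    show "independent (T ` rw ` Z)" using linear_independent_injective_image[OF linT indB injT] .
    have "card (T ` rw ` Z) = card (rw ` Z)"
      using card_image[OF inj_on_subset[OF injT span_superset]] .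
    then show "dim ?W \<le> card (T ` rw ` Z)" using dim_span_eq_card_independent[OF indB] by simp
  qed
  also have "\<dots> = T ` ?W" using span_linear_image[OF linT] .
  finally have surj: "?W \<subseteq> T ` ?W" .
  have col: "\<exists>m. \<forall>x\<in>Z. (\<Sum>a\<in>Z. K x a * m a) = (if x = b then 1 else 0)" if b: "b \<in> Z" for b
  proof -
    obtain y where y: "y \<in> ?W" "T y = rw b" using surj b span_base[of "rw b" "rw ` Z"] by force
    obtain c where c: "y = (\<Sum>a\<in>Z. c a *\<^sub>R rw a)" using span_rows[OF ind fin y(1)] by blast
    have d1: "(\<Sum>a\<in>Z. (if a = b then 1 else 0) *\<^sub>R rw a) = (\<Sum>a\<in>Z. if a = b then rw b else 0)"
      by (rule sum.cong) auto
    have d2: "(\<Sum>a\<in>Z. if a = b then rw b else 0) = rw b" using b fin by (simp add: sum.delta)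
    have "(\<Sum>a\<in>Z. (rw a \<bullet> (G *v y) - (if a = b then 1 else 0)) *\<^sub>R rw a) = T y - rw b"
      unfolding scaleR_diff_left sum_subtractf d1 d2 T_def ..
    also have "\<dots> = 0" using y by simp
    finally have "\<forall>a\<in>Z. rw a \<bullet> (G *v y) - (if a = b then 1 else 0) = 0"
      using rows_indepD[OF ind, of "\<lambda>a. rw a \<bullet> (G *v y) - (if a = b then 1 else 0)"] by blast
    then show ?thesis using c by (intro exI[of _ c]) (simp add: inner_G_comb K_def)
  qed
  then obtain m where m: "\<forall>b\<in>Z. \<forall>x\<in>Z. (\<Sum>a\<in>Z. K x a * m b a) = (if x = b then 1 else 0)"
    by metis
  have ex: "?P (\<lambda>a b. if a \<in> Z \<and> b \<in> Z then m b a else 0)"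
  proof (intro conjI ballI allI impI)
    fix a b assume "a \<in> Z" "b \<in> Z"
    then show "(\<Sum>c\<in>Z. K a c * (if c \<in> Z \<and> b \<in> Z then m b c else 0)) = (if a = b then 1 else 0)"
      using m by (auto intro: sum.cong)
  qed auto
  have "?P (set_mat_inv Z K)" unfolding set_mat_inv_def
    by (rule theI[of ?P, OF ex]) (erule uniq[OF _ ex])
  then show ?thesis by blast
qed



lemma posdef_inv:
  fixes Hm :: "real^'n^'n"
  assumes pd: "\<forall>h. h \<noteq> 0 \<longrightarrow> 0 < h \<bullet> (Hm *v h)"
  shows "Hm ** matrix_inv Hm = mat 1" "matrix_inv Hm ** Hm = mat 1"
proof -
  have "inj ((*v) Hm)"
  proof (rule injI)
    fix a b assume "Hm *v a = Hm *v b"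
    then have "Hm *v (a - b) = 0" by (simp add: matrix_vector_mult_diff_distrib)
    then have "a - b = 0" using pd[rule_format, of "a - b"] by (cases "a - b = 0") auto
    then show "a = b" by simp
  qed
  then have "invertible Hm" using matrix_left_invertible_injective invertible_left_inverse by blast
  then have "\<exists>A'. Hm ** A' = mat 1 \<and> A' ** Hm = mat 1" unfolding invertible_def .
  from someI_ex[OF this] show "Hm ** matrix_inv Hm = mat 1" "matrix_inv Hm ** Hm = mat 1"
    unfolding matrix_inv_def by auto
qed

lemma Pmat_char:
  fixes Hm :: "real^'n^'n" and rw :: "nat + nat \<Rightarrow> real^'n" and u :: "real^'n"
  assumes pd: "\<forall>h. h \<noteq> 0 \<longrightarrow> 0 < h \<bullet> (Hm *v h)"
    and ind: "rows_indep rw Z" and fin: "finite Z"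
  defines "q \<equiv> - (Pmat Hm rw Z *v u)"
  shows "(\<forall>a\<in>Z. rw a \<bullet> q = 0) \<and> (\<forall>z. (\<forall>a\<in>Z. rw a \<bullet> z = 0) \<longrightarrow> (Hm *v q + u) \<bullet> z = 0)"
proof -
  define Hi where "Hi = matrix_inv Hm"
  have HHi: "Hm *v (Hi *v y) = y" for y
    using posdef_inv[OF pd] by (simp add: Hi_def matrix_vector_mul_assoc)
  have pdHi: "\<forall>y. y \<noteq> 0 \<longrightarrow> 0 < y \<bullet> (Hi *v y)"
  proof (intro allI impI)
    fix y :: "real^'n" assume y: "y \<noteq> 0"
    have "Hi *v y \<noteq> 0" using HHi[of y] y by (metis matrix_vector_mult_0_right)
    then have "0 < (Hi *v y) \<bullet> (Hm *v (Hi *v y))" using pd by blast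
    then show "0 < y \<bullet> (Hi *v y)" by (simp add: HHi inner_commute)
  qed
  define K where "K = (\<lambda>a b. rw a \<bullet> (Hi *v rw b))"
  define Ki where "Ki = set_mat_inv Z K"
  have rinv: "\<forall>a\<in>Z. \<forall>b\<in>Z. (\<Sum>c\<in>Z. K a c * Ki c b) = (if a = b then 1 else 0)"
    using set_mat_inv_right[OF ind fin pdHi] unfolding K_def Ki_def .
  define \<beta> where "\<beta> = (\<lambda>b. rw b \<bullet> (Hi *v u))"
  define \<mu> where "\<mu> = (\<lambda>a. \<Sum>b\<in>Z. Ki a b * \<beta> b)"
  define C where "C = (\<chi> i j. \<Sum>a\<in>Z. \<Sum>b\<in>Z. (Hi *v rw a) $ i * Ki a b * (rw b v* Hi) $ j)"
  have Cu: "C *v u = (\<Sum>a\<in>Z. \<mu> a *\<^sub>R (Hi *v rw a))"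
    unfolding vec_eq_iff
  proof (intro allI)
    fix i
    have \<beta>': "\<beta> b = (\<Sum>j\<in>UNIV. (rw b v* Hi) $ j * u $ j)" for b
    proof -
      have "\<beta> b = (rw b v* Hi) \<bullet> u" unfolding \<beta>_def by (rule dot_lmul_matrix[symmetric])
      then show ?thesis by (simp add: inner_vec_def)
    qed
    have "(C *v u) $ i = (\<Sum>j\<in>UNIV. \<Sum>a\<in>Z. \<Sum>b\<in>Z. (Hi *v rw a) $ i * Ki a b * ((rw b v* Hi) $ j * u $ j))"
      by (simp add: C_def matrix_vector_mult_def sum_distrib_right mult.assoc)
    also have "\<dots> = (\<Sum>a\<in>Z. \<Sum>j\<in>UNIV. \<Sum>b\<in>Z. (Hi *v rw a) $ i * Ki a b * ((rw b v* Hi) $ j * u $ j))"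
      by (rule sum.swap)
    also have "\<dots> = (\<Sum>a\<in>Z. \<Sum>b\<in>Z. \<Sum>j\<in>UNIV. (Hi *v rw a) $ i * Ki a b * ((rw b v* Hi) $ j * u $ j))"
      by (rule sum.cong[OF refl], rule sum.swap)
    also have "\<dots> = (\<Sum>a\<in>Z. \<mu> a * (Hi *v rw a) $ i)"
      by (simp add: \<mu>_def \<beta>' sum_distrib_left sum_distrib_right mult_ac)
    finally show "(C *v u) $ i = (\<Sum>a\<in>Z. \<mu> a *\<^sub>R (Hi *v rw a)) $ i"
      by (simp add: sum_component)
  qed
  have Pu: "Pmat Hm rw Z *v u = Hi *v u - (\<Sum>a\<in>Z. \<mu> a *\<^sub>R (Hi *v rw a))"
    unfolding Pmat_def Let_def Hi_def[symmetric] K_def[symmetric] Ki_def[symmetric] C_def[symmetric]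
    by (simp add: matrix_vector_mult_diff_rdistrib Cu)
  have q: "q = (\<Sum>a\<in>Z. \<mu> a *\<^sub>R (Hi *v rw a)) - Hi *v u"
    unfolding q_def Pu by simp
  have Hq: "Hm *v q = (\<Sum>a\<in>Z. \<mu> a *\<^sub>R rw a) - u"
    unfolding q by (simp add: matrix_vector_mult_diff_distrib vec.sum matrix_vector_mult_scaleR HHi)
  have part2: "\<forall>z. (\<forall>a\<in>Z. rw a \<bullet> z = 0) \<longrightarrow> (Hm *v q + u) \<bullet> z = 0"
    unfolding Hq by (simp add: inner_sum_left)
  have part1: "rw c \<bullet> q = 0" if c: "c \<in> Z" for c
  proof -
    have "rw c \<bullet> q = (\<Sum>a\<in>Z. \<mu> a * K c a) - \<beta> c"
      unfolding q by (simp add: inner_diff_right inner_sum_right K_def \<beta>_def)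
    also have "(\<Sum>a\<in>Z. \<mu> a * K c a) = (\<Sum>b\<in>Z. (\<Sum>a\<in>Z. K c a * Ki a b) * \<beta> b)"
      unfolding \<mu>_def by (simp add: sum_distrib_left sum_distrib_right mult_ac) (rule sum.swap)
    also have "\<dots> = (\<Sum>b\<in>Z. (if c = b then \<beta> b else 0))"
      using rinv c by (intro sum.cong) auto
    also have "\<dots> = \<beta> c" using c fin by (simp add: sum.delta)
    finally show ?thesis by simp
  qed
  show ?thesis using part1 part2 by blast
qed



lemma coercive:
  fixes Hm :: "real^'n^'n"
  assumes pd: "\<forall>h. h \<noteq> 0 \<longrightarrow> 0 < h \<bullet> (Hm *v h)"
  shows "\<exists>c>0. \<forall>h. c * (norm h)^2 \<le> h \<bullet> (Hm *v h)"
proof -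
  let ?S = "sphere (0::real^'n) 1"
  have cont: "continuous_on ?S (\<lambda>h. h \<bullet> (Hm *v h))"
    by (intro continuous_intros continuous_on_id linear_continuous_on matrix_vector_mul_bounded_linear)
  have ne: "?S \<noteq> {}"
    by (simp add: sphere_eq_empty)
  obtain m where m: "m \<in> ?S" "\<forall>y\<in>?S. m \<bullet> (Hm *v m) \<le> y \<bullet> (Hm *v y)"
    using continuous_attains_inf[OF compact_sphere ne cont] by blast
  have m0: "m \<noteq> 0" using m(1) by auto
  show ?thesis
  proof (intro exI[of _ "m \<bullet> (Hm *v m)"] conjI allI)
    show "0 < m \<bullet> (Hm *v m)" using pd m0 by blast
    fix h :: "real^'n"
    show "m \<bullet> (Hm *v m) * (norm h)^2 \<le> h \<bullet> (Hm *v h)"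
    proof (cases "h = 0")
      case True then show ?thesis by simp
    next
      case False
      let ?h = "(1 / norm h) *\<^sub>R h"
      have "?h \<in> ?S" using False by simp
      then have le: "m \<bullet> (Hm *v m) \<le> ?h \<bullet> (Hm *v ?h)" using m(2) by blast
      have "?h \<bullet> (Hm *v ?h) = (h \<bullet> (Hm *v h)) / (norm h)^2"
        by (simp add: matrix_vector_mult_scaleR power2_eq_square)
      with le have "m \<bullet> (Hm *v m) \<le> (h \<bullet> (Hm *v h)) / (norm h)^2" by simp
      moreover have "(norm h)^2 > 0" using False by simp
      ultimately show ?thesis by (simp add: le_divide_eq)
    qed
  qed
qed



theorem proposition1:
  fixes f :: "real^'n \<Rightarrow> real"
    and grad :: "real^'n \<Rightarrow> real^'n"
    and H :: "real^'n \<Rightarrow> real^'n^'n"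
    and v w :: "nat \<Rightarrow> real^'n"
    and d e :: "nat \<Rightarrow> real"
    and r s :: nat
    and I :: "real set"
    and xr :: "real \<Rightarrow> real^'n"
  assumes convex: "convex_on UNIV f"
    and grad: "\<forall>x. (f has_derivative (\<lambda>h. grad x \<bullet> h)) (at x)"
    and hess: "\<forall>x. (grad has_derivative (\<lambda>h. H x *v h)) (at x)"
    and hess_cont: "continuous_on UNIV H"
    and posdef: "\<forall>x h. h \<noteq> 0 \<longrightarrow> 0 < h \<bullet> (H x *v h)"
    and I_open: "open I" and I_interval: "is_interval I" and I_pos: "I \<subseteq> {0<..}"
    and minimizer: "\<forall>\<rho>\<in>I. \<forall>y. penE f v d r w e s \<rho> (xr \<rho>) \<le> penE f v d r w e s \<rho> y"
    and cont: "continuous_on I xr"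
    and const_sets: "\<forall>\<rho>\<in>I. \<forall>\<rho>'\<in>I.
          NE v d r (xr \<rho>) = NE v d r (xr \<rho>') \<and> ZE v d r (xr \<rho>) = ZE v d r (xr \<rho>') \<and>
          PE v d r (xr \<rho>) = PE v d r (xr \<rho>') \<and> NI w e s (xr \<rho>) = NI w e s (xr \<rho>') \<and>
          ZI w e s (xr \<rho>) = ZI w e s (xr \<rho>') \<and> PI w e s (xr \<rho>) = PI w e s (xr \<rho>')"
    and indep: "\<forall>\<rho>\<in>I. rows_indep (Zrow v w) (Zset v d r w e s (xr \<rho>))"
  shows "\<forall>\<rho>\<in>I. (xr has_vector_derivative
            (- (Pmat (H (xr \<rho>)) (Zrow v w) (Zset v d r w e s (xr \<rho>)) *v ubar v d r w e s (xr \<rho>))))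
            (at \<rho>)"
proof
  fix \<rho> assume \<rho>I: "\<rho> \<in> I"
  define x where "x = xr \<rho>"
  define Zs where "Zs = Zset v d r w e s x"
  define rw where "rw = Zrow v w"
  define u where "u = ubar v d r w e s x"
  define Hm where "Hm = H x"
  define q where "q = - (Pmat Hm rw Zs *v u)"
  have fin: "finite Zs" unfolding Zs_def Zset_def ZE_def ZI_def by auto
  have pd: "\<forall>h. h \<noteq> 0 \<longrightarrow> 0 < h \<bullet> (Hm *v h)" using posdef by (simp add: Hm_def)
  have ind: "rows_indep rw Zs" using indep \<rho>I by (simp add: rw_def Zs_def x_def)
  from Pmat_char[OF pd ind fin, of u]
  have qN: "\<forall>a\<in>Zs. rw a \<bullet> q = 0" and qH: "\<forall>z. (\<forall>a\<in>Zs. rw a \<bullet> z = 0) \<longrightarrow> (Hm *v q + u) \<bullet> z = 0"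
    unfolding q_def by auto
  have ZE_eq: "ZE v d r (xr t) = ZE v d r x" and ZI_eq: "ZI w e s (xr t) = ZI w e s x"
    and u_eq: "ubar v d r w e s (xr t) = u" if "t \<in> I" for t
    using const_sets \<rho>I that unfolding x_def u_def ubar_def by metis+
  have opt: "(grad (xr t) + t *\<^sub>R u) \<bullet> z = 0" if tI: "t \<in> I" and zN: "\<forall>a\<in>Zs. rw a \<bullet> z = 0" for t z
  proof -
    have "(grad (xr t) + t *\<^sub>R ubar v d r w e s (xr t)) \<bullet> z = 0"
    proof (rule optimality[OF spec[OF grad, of "xr t"] bspec[OF minimizer tI]])
      show "\<forall>i<r. v i \<bullet> xr t - d i = 0 \<longrightarrow> v i \<bullet> z = 0"
      proof (intro allI impI)
        fix i assume "i < r" "v i \<bullet> xr t - d i = 0"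
        then have "i \<in> ZE v d r x" using ZE_eq[OF tI] unfolding ZE_def by blast
        then have "Inl i \<in> Zs" unfolding Zs_def Zset_def by blast
        then show "v i \<bullet> z = 0" using zN[rule_format, of "Inl i"] by (simp add: rw_def Zrow_def)
      qed
      show "\<forall>j<s. w j \<bullet> xr t - e j = 0 \<longrightarrow> w j \<bullet> z = 0"
      proof (intro allI impI)
        fix j assume "j < s" "w j \<bullet> xr t - e j = 0"
        then have "j \<in> ZI w e s x" using ZI_eq[OF tI] unfolding ZI_def by blast
        then have "Inr j \<in> Zs" unfolding Zs_def Zset_def by blast
        then show "w j \<bullet> z = 0" using zN[rule_format, of "Inr j"] by (simp add: rw_def Zrow_def)
      qed
    qed
    then show ?thesis using u_eq[OF tI] by simp
  qed
  have dN: "\<forall>a\<in>Zs. rw a \<bullet> (xr t - x) = 0" if tI: "t \<in> I" for t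
  proof
    fix a assume a: "a \<in> Zs"
    then consider i where "a = Inl i" "i \<in> ZE v d r x" | j where "a = Inr j" "j \<in> ZI w e s x"
      unfolding Zs_def Zset_def by blast
    then show "rw a \<bullet> (xr t - x) = 0"
    proof cases
      case 1
      then have "i \<in> ZE v d r (xr t)" using ZE_eq[OF tI] by simp
      then show ?thesis using 1 by (simp add: rw_def Zrow_def ZE_def inner_diff_right)
    next
      case 2
      then have "j \<in> ZI w e s (xr t)" using ZI_eq[OF tI] by simp
      then show ?thesis using 2 by (simp add: rw_def Zrow_def ZI_def inner_diff_right)
    qed
  qed
  obtain c where c0: "c > 0" and cH: "\<forall>h. c * (norm h)^2 \<le> h \<bullet> (Hm *v h)"
    using coercive[OF pd] by blast
  have isc: "isCont xr \<rho>" using cont I_open \<rho>I continuous_on_eq_continuous_at by blast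
  obtain \<delta>3 where \<delta>3: "\<delta>3 > 0" "ball \<rho> \<delta>3 \<subseteq> I" using I_open \<rho>I open_contains_ball by blast
  have hx: "(grad has_derivative (\<lambda>h. Hm *v h)) (at x)" using hess by (simp add: Hm_def)
  show "(xr has_vector_derivative (- (Pmat (H (xr \<rho>)) (Zrow v w) (Zset v d r w e s (xr \<rho>)) *v ubar v d r w e s (xr \<rho>)))) (at \<rho>)"
    unfolding has_vector_derivative_def q_def[unfolded Hm_def rw_def Zs_def u_def x_def, symmetric]
    unfolding has_derivative_at_alt
  proof (intro conjI allI impI)
    show "bounded_linear (\<lambda>t. t *\<^sub>R q)" by (rule bounded_linear_scaleR_left)
    fix \<epsilon> :: real assume \<epsilon>: "\<epsilon> > 0"
    define K0 where "K0 = norm q + 1"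
    have K0: "K0 > 0" "norm q \<le> K0" unfolding K0_def by (auto intro: add_nonneg_pos)
    define \<eta> where "\<eta> = min (c/2) (\<epsilon> * c / (2 * K0))"
    have \<eta>: "\<eta> > 0" "\<eta> \<le> c/2" "\<eta> \<le> \<epsilon> * c / (2 * K0)"
      unfolding \<eta>_def using c0 \<epsilon> K0 by auto
    obtain \<delta>1 where \<delta>1: "\<delta>1 > 0" "\<forall>y. norm (y - x) < \<delta>1 \<longrightarrow> norm (grad y - grad x - Hm *v (y - x)) \<le> \<eta> * norm (y - x)"
      using hx[unfolded has_derivative_at_alt] \<eta>(1) by blast
    obtain \<delta>2 where \<delta>2: "\<delta>2 > 0" "\<forall>t. dist t \<rho> < \<delta>2 \<longrightarrow> dist (xr t) (xr \<rho>) < \<delta>1"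
      using isc[unfolded continuous_at_eps_delta] \<delta>1(1) by blast
    show "\<exists>\<delta>>0. \<forall>t. norm (t - \<rho>) < \<delta> \<longrightarrow> norm (xr t - xr \<rho> - (t - \<rho>) *\<^sub>R q) \<le> \<epsilon> * norm (t - \<rho>)"
    proof (intro exI[of _ "min \<delta>2 \<delta>3"] conjI allI impI)
      show "min \<delta>2 \<delta>3 > 0" using \<delta>2 \<delta>3 by simp
      fix t assume t: "norm (t - \<rho>) < min \<delta>2 \<delta>3"
      have tI: "t \<in> I" using t \<delta>3(2) by (auto simp: dist_real_def)
      define dv where "dv = xr t - x"
      define \<tau> where "\<tau> = t - \<rho>"
      define zz where "zz = dv - \<tau> *\<^sub>R q"
      define R where "R = grad (xr t) - grad x - Hm *v dv"
      have ndv: "norm dv < \<delta>1" using \<delta>2(2) t unfolding dv_def x_def by (simp add: dist_norm)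
      have nR: "norm R \<le> \<eta> * norm dv" using \<delta>1(2) ndv unfolding R_def dv_def by (metis add_diff_cancel_left' diff_add_cancel)
      have zN: "\<forall>a\<in>Zs. rw a \<bullet> zz = 0"
        using dN[OF tI] qN unfolding zz_def dv_def by (simp add: inner_diff_right)
      have e1: "(grad (xr t) + t *\<^sub>R u) \<bullet> zz = 0" using opt[OF tI zN] .
      have e2: "(grad x + \<rho> *\<^sub>R u) \<bullet> zz = 0" using opt[OF \<rho>I zN] by (simp add: x_def)
      have e3: "(Hm *v q + u) \<bullet> zz = 0" using qH zN by blast
      have Hzz: "Hm *v zz = grad (xr t) - grad x - R - \<tau> *\<^sub>R (Hm *v q)"
        unfolding zz_def R_def by (simp add: matrix_vector_mult_diff_distrib matrix_vector_mult_scaleR)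
      have e3a: "(Hm *v q) \<bullet> zz + u \<bullet> zz = 0" using e3 by (simp only: inner_add_left)
      have e3': "zz \<bullet> (Hm *v q) = - (zz \<bullet> u)"
        using e3a inner_commute[of zz "Hm *v q"] inner_commute[of zz u] by linarith
      have e1a: "grad (xr t) \<bullet> zz + t * (u \<bullet> zz) = 0" using e1 by (simp only: inner_add_left inner_scaleR_left)
      have e1': "zz \<bullet> grad (xr t) = - t * (zz \<bullet> u)"
        using e1a by (simp add: inner_commute[of zz "grad (xr t)"] inner_commute[of zz u]; linarith)
      have e2a: "grad x \<bullet> zz + \<rho> * (u \<bullet> zz) = 0" using e2 by (simp only: inner_add_left inner_scaleR_left)
      have e2': "zz \<bullet> grad x = - \<rho> * (zz \<bullet> u)"
        using e2a by (simp add: inner_commute[of zz "grad x"] inner_commute[of zz u]; linarith)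
      have "zz \<bullet> (Hm *v zz) = - (zz \<bullet> R)"
        unfolding Hzz \<tau>_def inner_diff_right inner_scaleR_right e1' e2' e3'
        by (simp add: algebra_simps)
      also have "\<dots> = - (R \<bullet> zz)" by (simp add: inner_commute)
      also have "\<dots> \<le> norm R * norm zz"
        using norm_cauchy_schwarz[of "-R" zz] by simp
      also have "\<dots> \<le> \<eta> * norm dv * norm zz" using nR by (simp add: mult_right_mono)
      finally have h1: "c * (norm zz)^2 \<le> \<eta> * norm dv * norm zz" using cH[rule_format, of zz] by linarith
      have h2: "c * norm zz \<le> \<eta> * norm dv"
      proof (cases "zz = 0")
        case True then show ?thesis using \<eta>(1) by simp
      next
        case False
        then have "norm zz > 0" by simp
        with h1 show ?thesis by (simp add: power2_eq_square mult.assoc[symmetric])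
      qed
      have h3: "norm dv \<le> norm zz + \<bar>\<tau>\<bar> * norm q"
      proof -
        have "dv = zz + \<tau> *\<^sub>R q" unfolding zz_def by simp
        then show ?thesis using norm_triangle_ineq[of zz "\<tau> *\<^sub>R q"] by simp
      qed
      have "c * norm zz \<le> \<eta> * norm zz + \<eta> * (\<bar>\<tau>\<bar> * norm q)"
        using h2 mult_left_mono[OF h3, of \<eta>] \<eta>(1) by (simp add: distrib_left)
      moreover have "\<eta> * norm zz \<le> c/2 * norm zz" using mult_right_mono[OF \<eta>(2) norm_ge_zero[of zz]] .
      moreover have "\<eta> * norm q \<le> \<epsilon> * c / 2"
      proof -
        have "\<eta> * norm q \<le> \<epsilon> * c / (2 * K0) * K0"
          using \<eta> K0 mult_mono[OF \<eta>(3) K0(2)] \<epsilon> c0 by simp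
        also have "\<dots> = \<epsilon> * c / 2" using K0 by simp
        finally show ?thesis .
      qed
      then have "\<eta> * (\<bar>\<tau>\<bar> * norm q) \<le> \<epsilon> * c / 2 * \<bar>\<tau>\<bar>"
        by (metis abs_ge_zero mult.assoc mult.commute mult_right_mono)
      ultimately have "c/2 * norm zz \<le> c/2 * (\<epsilon> * \<bar>\<tau>\<bar>)" by (simp add: algebra_simps)
      then have "norm zz \<le> \<epsilon> * \<bar>\<tau>\<bar>" using c0 by simp
      then show "norm (xr t - xr \<rho> - (t - \<rho>) *\<^sub>R q) \<le> \<epsilon> * norm (t - \<rho>)"
        unfolding zz_def dv_def \<tau>_def x_def by simp
    qed
  qed
qed

end
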